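(* Let $p,q\in\mathbb{N}$ be coprime, $k\in\mathbb{N}$ squarefree, $m=-pk$, $n=qk$. (i) If the quadratic forms $X^2+mY^2$ and $X^2+nY^2$ are concordant due to $4$- or $8$-torsion, then $k=1$. (ii) If they are concordant due to $3$- or $6$-torsion, then $k=1$ or $k=3$.
   Context: For nonzero integers $m\neq n$, the forms $X^2+mY^2$ and $X^2+nY^2$ are concordant if the system $X^2+mY^2=Z^2$, $X^2+nY^2=W^2$ has an integer solution with $Y\neq0$. Let $Q(m,n)\subset\mathbb{P}^3$ be the curve $X_0^2+mX_1^2=X_2^2,\ X_0^2+nX_1^2=X_3^2$ and $E(m,n)$ the elliptic curve $y^2=x(x+m)(x+n)$ (projectively $Y^2T=X(X+mT)(X+nT)$, coordinates $(T:X:Y)$). There is an isomorphism of curves $\varphi:Q(m,n)\to E(m,n)$ extending the rational map $(X_0:X_1:X_2:X_3)\mapsto\bigl(nX_2-mX_3+(m-n)X_0 : mn(X_3-X_2) : mn(m-n)X_1\bigr)$; it maps the trivial points $(1:0:\pm1:\pm1)$ to the neutral element and the 2-torsion points, and every nontrivial rational solution to a rational point of order $>2$. The forms are said to be concordant due to $N$-torsion if some nontrivial rational solution $(X_0:X_1:X_2:X_3)$ (i.e. with $X_1\neq0$) is mapped by $\varphi$ to a rational point of $E(m,n)$ of order exactly $N$; equivalently, $E(m,n)(\mathbb{Q})$ has a point of order $N$. *)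

theory Defs
  imports "HOL-Computational_Algebra.Computational_Algebra"
begin

text \<open>Rational points of E(m,n): y^2 = x(x+m)(x+n) = x^3 + (m+n) x^2 + mn x.
  None is the point at infinity (the neutral element), Some (x,y) an affine point.\<close>

type_synonym ecpt = "(rat \<times> rat) option"

definition on_E :: "int \<Rightarrow> int \<Rightarrow> ecpt \<Rightarrow> bool" where
  "on_E m n P = (case P of None \<Rightarrow> True
     | Some (x, y) \<Rightarrow> y^2 = x * (x + of_int m) * (x + of_int n))"

text \<open>Chord-and-tangent group law on the Weierstrass curve
  y^2 = x^3 + a2 x^2 + a4 x with a2 = m+n, a4 = mn.\<close>

definition E_add :: "int \<Rightarrow> int \<Rightarrow> ecpt \<Rightarrow> ecpt \<Rightarrow> ecpt" where
  "E_add m n P Q = (case P of None \<Rightarrow> Q | Some (x1, y1) \<Rightarrow>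
     (case Q of None \<Rightarrow> P | Some (x2, y2) \<Rightarrow>
       (if x1 = x2 \<and> y1 = - y2 then None
        else let a2 = of_int (m + n); a4 = of_int (m * n);
                 l = (if x1 = x2 then (3 * x1^2 + 2 * a2 * x1 + a4) / (2 * y1)
                      else (y2 - y1) / (x2 - x1));
                 x3 = l^2 - a2 - x1 - x2;
                 y3 = - (l * (x3 - x1) + y1)
             in Some (x3, y3))))"

fun E_mult :: "int \<Rightarrow> int \<Rightarrow> nat \<Rightarrow> ecpt \<Rightarrow> ecpt" where
  "E_mult m n 0 P = None"
| "E_mult m n (Suc d) P = E_add m n P (E_mult m n d P)"

definition has_order :: "int \<Rightarrow> int \<Rightarrow> ecpt \<Rightarrow> nat \<Rightarrow> bool" where
  "has_order m n P N = (0 < N \<and> E_mult m n N P = None \<and>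
     (\<forall>d. 0 < d \<and> d < N \<longrightarrow> E_mult m n d P \<noteq> None))"

text \<open>Rational points of Q(m,n) (given by rational representatives).\<close>

definition on_Q :: "int \<Rightarrow> int \<Rightarrow> rat \<Rightarrow> rat \<Rightarrow> rat \<Rightarrow> rat \<Rightarrow> bool" where
  "on_Q m n X0 X1 X2 X3 = (X0^2 + of_int m * X1^2 = X2^2 \<and> X0^2 + of_int n * X1^2 = X3^2)"

text \<open>The map phi, evaluated by the given formula
  (T:X:Y) = (n X2 - m X3 + (m-n) X0 : mn (X3 - X2) : mn (m-n) X1),
  converted to an affine point (X/T, Y/T), or to the point at infinity when T = 0.
  For nontrivial points (X1 \<noteq> 0) the Y-coordinate is nonzero, so the formula
  defines the image point.\<close>

definition phi :: "int \<Rightarrow> int \<Rightarrow> rat \<Rightarrow> rat \<Rightarrow> rat \<Rightarrow> rat \<Rightarrow> ecpt" where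
  "phi m n X0 X1 X2 X3 =
     (let mm = of_int m; nn = of_int n;
          T = nn * X2 - mm * X3 + (mm - nn) * X0;
          X = mm * nn * (X3 - X2);
          Y = mm * nn * (mm - nn) * X1
      in if T = 0 then None else Some (X / T, Y / T))"

definition concordant_torsion :: "int \<Rightarrow> int \<Rightarrow> nat \<Rightarrow> bool" where
  "concordant_torsion m n N = (\<exists>X0 X1 X2 X3. on_Q m n X0 X1 X2 X3 \<and> X1 \<noteq> 0 \<and>
      has_order m n (phi m n X0 X1 X2 X3) N)"

end

theory Submission
  imports Defs
begin


lemma vieta_core:
  fixes x1 x2 x3 l y1 M N :: rat
  assumes e1: "y1^2 = x1*(x1+M)*(x1+N)"
    and V1: "x3 = l^2 - (M+N) - x1 - x2"
    and V2: "M*N - 2*l*(y1 - l*x1) = x1*x2 + x1*x3 + x2*x3"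
  shows "z*(z+M)*(z+N) - (l*(z-x1)+y1)^2 = (z-x1)*(z-x2)*(z-x3)"
proof -
  have V3: "(y1 - l*x1)^2 = x1*x2*x3"
    using e1 V1 V2 by algebra
  show ?thesis using V1 V2 V3 by algebra
qed

lemma chord_V2:
  fixes x1 x2 l y1 y2 M N :: rat
  assumes e1: "y1^2 = x1*(x1+M)*(x1+N)" and e2: "y2^2 = x2*(x2+M)*(x2+N)"
    and ne: "x1 \<noteq> x2" and hl: "l = (y2-y1)/(x2-x1)"
  shows "M*N - 2*l*(y1 - l*x1) = x1*x2 + x1*(l^2 - (M+N) - x1 - x2) + x2*(l^2 - (M+N) - x1 - x2)"
proof -
  have hl2: "y2 = l*(x2-x1) + y1" using ne hl by (simp add: field_simps)
  have "(x1 - x2) * (M*N - 2*l*(y1 - l*x1) - (x1*x2 + x1*(l^2 - (M+N) - x1 - x2) + x2*(l^2 - (M+N) - x1 - x2))) = 0"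
    using e1 e2 hl2 by algebra
  then show ?thesis using ne by simp
qed

lemma tangent_V2:
  fixes x1 l y1 M N :: rat
  assumes e1: "y1^2 = x1*(x1+M)*(x1+N)" and ne: "y1 \<noteq> 0"
    and hl: "l = (3*x1^2 + 2*(M+N)*x1 + M*N)/(2*y1)"
  shows "M*N - 2*l*(y1 - l*x1) = x1*x1 + x1*(l^2 - (M+N) - x1 - x1) + x1*(l^2 - (M+N) - x1 - x1)"
proof -
  have "2*y1*l = 3*x1^2 + 2*(M+N)*x1 + M*N" using ne hl by (simp add: field_simps)
  then show ?thesis by algebra
qed



definition fE :: "int \<Rightarrow> int \<Rightarrow> rat \<Rightarrow> rat" where
  "fE m n x = x*(x+of_int m)*(x+of_int n)"

definition negP :: "ecpt \<Rightarrow> ecpt" where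
  "negP P = map_option (\<lambda>(x,y). (x,-y)) P"

lemma negP_simps[simp]: "negP None = None" "negP (Some (x,y)) = Some (x,-y)"
  by (simp_all add: negP_def)

lemma on_E_Some: "on_E m n (Some (x,y)) \<longleftrightarrow> y^2 = fE m n x"
  by (simp add: on_E_def fE_def)

lemma E_add_None_left[simp]: "E_add m n None Q = Q" by (simp add: E_add_def)
lemma E_add_None_right[simp]: "E_add m n P None = P" by (cases P) (auto simp: E_add_def)

lemma E_add_inv: "E_add m n (Some(x1,y1)) (Some(x2,y2)) = None \<longleftrightarrow> x1=x2 \<and> y1 = -y2"
  by (simp add: E_add_def Let_def)

lemma E_add_SS:
  assumes "\<not> (x1 = x2 \<and> y1 = -y2)"
  shows "E_add m n (Some(x1,y1)) (Some(x2,y2)) =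
    (let l = (if x1 = x2 then (3*x1^2 + 2*(of_int m + of_int n)*x1 + of_int m * of_int n)/(2*y1)
              else (y2-y1)/(x2-x1));
         x3 = l^2 - (of_int m + of_int n) - x1 - x2 in Some(x3, -(l*(x3-x1)+y1)))"
  using assms by (simp add: E_add_def Let_def)

lemma E_add_struct:
  assumes c1: "y1^2 = fE m n x1" and c2: "y2^2 = fE m n x2" and ne: "\<not>(x1=x2 \<and> y1 = -y2)"
  obtains l where
    "E_add m n (Some(x1,y1)) (Some(x2,y2)) =
       Some(l^2 - (of_int m + of_int n) - x1 - x2, -(l*(l^2 - (of_int m + of_int n) - x1 - x2 - x1)+y1))"
    and "\<And>z. fE m n z - (l*(z-x1)+y1)^2 = (z-x1)*(z-x2)*(z-(l^2 - (of_int m + of_int n) - x1 - x2))"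
    and "of_int m * of_int n - 2*l*(y1 - l*x1) = x1*x2 + x1*(l^2 - (of_int m + of_int n) - x1 - x2)
           + x2*(l^2 - (of_int m + of_int n) - x1 - x2)"
    and "x1 = x2 \<Longrightarrow> y2 = y1 \<and> y1 \<noteq> 0 \<and> 2*y1*l = 3*x1^2 + 2*(of_int m + of_int n)*x1 + of_int m * of_int n"
    and "x1 \<noteq> x2 \<Longrightarrow> l*(x2-x1) = y2 - y1"
proof (cases "x1 = x2")
  case True
  have "y2^2 = y1^2" using c1 c2 True by simp
  then have "y2 = y1 \<or> y2 = -y1" by (metis power2_eq_iff)
  with ne True have y21: "y2 = y1" by auto
  with ne True have y1: "y1 \<noteq> 0" by auto
  define l where "l = (3*x1^2 + 2*(of_int m + of_int n)*x1 + of_int m * of_int n)/(2*y1)"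
  have V2: "of_int m * of_int n - 2*l*(y1 - l*x1) = x1*x1 + x1*(l^2 - (of_int m + of_int n) - x1 - x1)
           + x1*(l^2 - (of_int m + of_int n) - x1 - x1)"
    by (rule tangent_V2) (use c1 y1 l_def in \<open>simp_all add: fE_def\<close>)
  have Z: "fE m n z - (l*(z-x1)+y1)^2 = (z-x1)*(z-x1)*(z-(l^2 - (of_int m + of_int n) - x1 - x1))" for z
    unfolding fE_def by (rule vieta_core[OF _ _ V2]) (use c1 in \<open>simp_all add: fE_def\<close>)
  have "2*y1*l = 3*x1^2 + 2*(of_int m + of_int n)*x1 + of_int m * of_int n"
    using y1 l_def by (simp add: field_simps)
  show ?thesis
    apply (rule that[of l])
    using True y21 y1 V2 Z \<open>2*y1*l = _\<close> by (simp_all add: E_add_SS Let_def l_def)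
next
  case False
  define l where "l = (y2-y1)/(x2-x1)"
  have V2: "of_int m * of_int n - 2*l*(y1 - l*x1) = x1*x2 + x1*(l^2 - (of_int m + of_int n) - x1 - x2)
           + x2*(l^2 - (of_int m + of_int n) - x1 - x2)"
    by (rule chord_V2) (use c1 c2 False l_def in \<open>simp_all add: fE_def\<close>)
  have Z: "fE m n z - (l*(z-x1)+y1)^2 = (z-x1)*(z-x2)*(z-(l^2 - (of_int m + of_int n) - x1 - x2))" for z
    unfolding fE_def by (rule vieta_core[OF _ _ V2]) (use c1 in \<open>simp_all add: fE_def\<close>)
  have "l*(x2-x1) = y2 - y1" using False l_def by (simp add: field_simps)
  show ?thesis
    apply (rule that[of l])
    using False V2 Z \<open>l*(x2-x1) = y2 - y1\<close> by (simp_all add: E_add_SS Let_def l_def)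
qed



lemma E_add_onE:
  assumes "on_E m n P" "on_E m n Q" shows "on_E m n (E_add m n P Q)"
proof (cases P)
  case None then show ?thesis using assms by simp
next
  case (Some a) note Pa = this
  obtain x1 y1 where a: "a = (x1,y1)" by (cases a)
  show ?thesis
  proof (cases Q)
    case None then show ?thesis using assms by simp
  next
    case (Some b)
    obtain x2 y2 where b: "b = (x2,y2)" by (cases b)
    have c1: "y1^2 = fE m n x1" and c2: "y2^2 = fE m n x2"
      using assms Pa Some a b by (simp_all add: on_E_Some)
    show ?thesis
    proof (cases "x1 = x2 \<and> y1 = -y2")
      case True then show ?thesis using Pa Some a b by (simp add: E_add_def on_E_def)
    next
      case False
      obtain l where E: "E_add m n (Some(x1,y1)) (Some(x2,y2)) =
       Some(l^2 - (of_int m + of_int n) - x1 - x2, -(l*(l^2 - (of_int m + of_int n) - x1 - x2 - x1)+y1))"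
        and Z: "\<And>z. fE m n z - (l*(z-x1)+y1)^2 = (z-x1)*(z-x2)*(z-(l^2 - (of_int m + of_int n) - x1 - x2))"
        using E_add_struct[OF c1 c2 False] by blast
      show ?thesis using Z[of "l^2 - (of_int m + of_int n) - x1 - x2"]
        by (simp add: Pa Some a b E on_E_Some power2_eq_square algebra_simps)
    qed
  qed
qed

lemma E_add_comm:
  assumes "on_E m n P" "on_E m n Q" shows "E_add m n P Q = E_add m n Q P"
proof (cases P)
  case None then show ?thesis by simp
next
  case (Some a) note Pa = this
  obtain x1 y1 where a: "a = (x1,y1)" by (cases a)
  show ?thesis
  proof (cases Q)
    case None then show ?thesis using Pa by simp
  next
    case (Some b)
    obtain x2 y2 where b: "b = (x2,y2)" by (cases b)
    have c1: "y1^2 = fE m n x1" and c2: "y2^2 = fE m n x2"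
      using assms Pa Some a b by (simp_all add: on_E_Some)
    show ?thesis
    proof (cases "x1 = x2 \<and> y1 = -y2")
      case True then show ?thesis using Pa Some a b by (simp add: E_add_def)
    next
      case False
      have F2: "\<not> (x2 = x1 \<and> y2 = -y1)" using False by auto
      show ?thesis
      proof (cases "x1 = x2")
        case True
        then have "y2 = y1" using E_add_struct[OF c1 c2 False] by metis
        then show ?thesis using True Pa Some a b by simp
      next
        case ne: False
        have l: "(y1-y2)/(x1-x2) = (y2-y1)/(x2-x1)"
          by (metis minus_diff_eq minus_divide_divide)
        have "-(((y2-y1)/(x2-x1))*(((y2-y1)/(x2-x1))^2 - (of_int m + of_int n) - x1 - x2 - x1)+y1) =
              -(((y2-y1)/(x2-x1))*(((y2-y1)/(x2-x1))^2 - (of_int m + of_int n) - x2 - x1 - x2)+y2)"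
          using ne by (simp add: field_simps)
        then show ?thesis using ne Pa Some a b False F2 l
          by (simp add: E_add_SS Let_def algebra_simps)
      qed
    qed
  qed
qed

lemma E_add_negP: "E_add m n (negP P) (negP Q) = negP (E_add m n P Q)"
proof (cases P)
  case None then show ?thesis by simp
next
  case (Some a) note Pa = this
  obtain x1 y1 where a: "a = (x1,y1)" by (cases a)
  show ?thesis
  proof (cases Q)
    case None then show ?thesis using Pa by simp
  next
    case (Some b)
    obtain x2 y2 where b: "b = (x2,y2)" by (cases b)
    show ?thesis
    proof (cases "x1 = x2 \<and> y1 = -y2")
      case True then show ?thesis using Pa Some a b by (simp add: E_add_def)
    next
      case False
      have F2: "\<not> (x1 = x2 \<and> -y1 = -(-y2))" using False by auto
      show ?thesis
      proof (cases "x1 = x2")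
        case True
        then show ?thesis using Pa Some a b False F2
          by (simp add: E_add_SS Let_def power2_eq_square field_simps)
      next
        case ne: False
        obtain L where L: "(y2-y1)/(x2-x1) = L" by blast
        have l: "(y1 - y2)/(x2-x1) = -L" unfolding L[symmetric] by (metis minus_diff_eq minus_divide_left)
        show ?thesis using Pa Some a b False F2 ne
          by (simp add: E_add_SS Let_def l L)
      qed
    qed
  qed
qed



lemma no_double_root:
  assumes mn: "m \<noteq> 0" "n \<noteq> 0" "m \<noteq> n" and Z: "\<And>z. fE m n z = (z-a)^2*(z-b)"
  shows False
proof -
  have "(0-a)^2*(0-b) = 0" using Z[of 0] by (simp add: fE_def)
  then have h0: "a = 0 \<or> b = 0" by simp
  have "(-of_int m-a)^2*(-of_int m-b) = 0" using Z[of "-of_int m"] by (simp add: fE_def)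
  then have h1: "a = -of_int m \<or> b = -of_int m" by auto
  have "(-of_int n-a)^2*(-of_int n-b) = 0" using Z[of "-of_int n"] by (simp add: fE_def)
  then have h2: "a = -of_int n \<or> b = -of_int n" by auto
  show False using h0 h1 h2 mn by auto
qed

lemma E_add_cancel:
  assumes mn: "m \<noteq> 0" "n \<noteq> 0" "m \<noteq> n" and A: "on_E m n A" and B: "on_E m n B"
  shows "E_add m n (E_add m n A B) (negP A) = B"
proof (cases A)
  case None then show ?thesis by simp
next
  case (Some a) note Aa = this
  obtain x1 y1 where a: "a = (x1,y1)" by (cases a)
  show ?thesis
  proof (cases B)
    case None then show ?thesis using Aa a by (simp add: E_add_def)
  next
    case (Some b)
    obtain x2 y2 where b: "b = (x2,y2)" by (cases b)
    have c1: "y1^2 = fE m n x1" and c2: "y2^2 = fE m n x2"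
      using A B Aa Some a b by (simp_all add: on_E_Some)
    show ?thesis
    proof (cases "x1 = x2 \<and> y1 = -y2")
      case True then show ?thesis using Aa Some a b by (simp add: E_add_def)
    next
      case False
      obtain l where E: "E_add m n (Some(x1,y1)) (Some(x2,y2)) =
       Some(l^2 - (of_int m + of_int n) - x1 - x2, -(l*(l^2 - (of_int m + of_int n) - x1 - x2 - x1)+y1))"
        and Z: "\<And>z. fE m n z - (l*(z-x1)+y1)^2 = (z-x1)*(z-x2)*(z-(l^2 - (of_int m + of_int n) - x1 - x2))"
        and V2: "of_int m * of_int n - 2*l*(y1 - l*x1) = x1*x2 + x1*(l^2 - (of_int m + of_int n) - x1 - x2)
           + x2*(l^2 - (of_int m + of_int n) - x1 - x2)"
        and T: "x1 = x2 \<Longrightarrow> y2 = y1 \<and> y1 \<noteq> 0 \<and> 2*y1*l = 3*x1^2 + 2*(of_int m + of_int n)*x1 + of_int m * of_int n"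
        and C: "x1 \<noteq> x2 \<Longrightarrow> l*(x2-x1) = y2 - y1"
        using E_add_struct[OF c1 c2 False] by blast
      have ly: "y2 = l*(x2-x1) + y1" using T C by (cases "x1 = x2") auto
      define x3 where "x3 = l^2 - (of_int m + of_int n) - x1 - x2"
      define y3 where "y3 = -(l*(x3 - x1)+y1)"
      have E': "E_add m n A B = Some (x3, y3)" using E Aa Some a b x3_def y3_def by simp
      show ?thesis
      proof (cases "x3 = x1")
        case False
        have nc: "\<not> (x3 = x1 \<and> y3 = - (-y1))" using False by simp
        have l': "(-y1 - y3)/(x1 - x3) = -l" using False unfolding y3_def
          by (simp add: field_simps)
        have e1: "E_add m n (Some (x3,y3)) (Some (x1,-y1)) =
           Some ((-l)^2 - (of_int m + of_int n) - x3 - x1, -((-l)*(((-l)^2 - (of_int m + of_int n) - x3 - x1) - x3) + y3))"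
          using False by (simp add: E_add_SS[OF nc] Let_def l')
        have q1: "(-l)^2 - (of_int m + of_int n) - x3 - x1 = x2" unfolding x3_def by simp
        have q2: "-((-l)*(x2 - x3) + y3) = y2" unfolding y3_def ly by (simp add: algebra_simps)
        have "E_add m n (Some (x3,y3)) (Some (x1,-y1)) = Some (x2, y2)"
          using e1 unfolding q1 q2 .
        then show ?thesis using E' Aa a Some b by simp
      next
        case True
        have y3: "y3 = -y1" using True unfolding y3_def by simp
        show ?thesis
        proof (cases "y1 = 0")
          case True
          then have ne: "x1 \<noteq> x2" using T by auto
          have "fE m n z = (z-x1)^2*(z-(x2 - l^2))" for z
            using Z[of z] True \<open>x3 = x1\<close> unfolding x3_def by algebra
          then have False using no_double_root[OF mn] by blast
          then show ?thesis ..
        next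
          case False
          have nc: "\<not> (x1 = x1 \<and> -y1 = - (-y1))" using False by simp
          have der: "2*y1*l = 3*x1^2 + 2*(of_int m + of_int n)*x1 + of_int m * of_int n"
          proof (cases "x1 = x2")
            case True then show ?thesis using T by blast
          next
            case False
            show ?thesis using V2 \<open>x3 = x1\<close> unfolding x3_def by algebra
          qed
          have l': "(3*x1^2 + 2*(of_int m + of_int n)*x1 + of_int m * of_int n)/(2*(-y1)) = -l"
            using der False by (simp add: field_simps)
          have e1: "E_add m n (Some (x1,-y1)) (Some (x1,-y1)) =
             Some ((-l)^2 - (of_int m + of_int n) - x1 - x1, -((-l)*(((-l)^2 - (of_int m + of_int n) - x1 - x1) - x1) + -y1))"
            unfolding E_add_SS[OF nc] Let_def if_P[OF refl] l' by simp
          have q1: "(-l)^2 - (of_int m + of_int n) - x1 - x1 = x2" using \<open>x3 = x1\<close> unfolding x3_def by simp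
          have q2: "-((-l)*(x2 - x1) + -y1) = y2" unfolding ly by (simp add: algebra_simps)
          have "E_add m n (Some (x1,-y1)) (Some (x1,-y1)) = Some (x2, y2)"
            using e1 unfolding q1 q2 .
          then show ?thesis using E' Aa a Some b True y3 by simp
        qed
      qed
    qed
  qed
qed



lemma on_E_None[simp]: "on_E m n None" by (simp add: on_E_def)

lemma E_mult_onE: "on_E m n P \<Longrightarrow> on_E m n (E_mult m n d P)"
  by (induction d) (simp_all add: E_add_onE)

lemma E_mult_1[simp]: "E_mult m n (Suc 0) P = P" by simp

lemma E_mult_backward:
  assumes mn: "m \<noteq> 0" "n \<noteq> 0" "m \<noteq> n" and P: "on_E m n P" and N: "E_mult m n N P = None"
  shows "j \<le> N \<Longrightarrow> E_mult m n (N-j) P = negP (E_mult m n j P)"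
proof (induction j)
  case 0 then show ?case using N by simp
next
  case (Suc j)
  then have IH: "E_mult m n (N-j) P = negP (E_mult m n j P)" by simp
  have NS: "N - j = Suc (N - Suc j)" using Suc.prems by simp
  let ?B = "E_mult m n (N - Suc j) P"
  have "?B = E_add m n (E_add m n P ?B) (negP P)"
    using E_add_cancel[OF mn P E_mult_onE[OF P]] by simp
  also have "E_add m n P ?B = E_mult m n (N-j) P" using NS by simp
  also have "\<dots> = negP (E_mult m n j P)" by (rule IH)
  also have "E_add m n (negP (E_mult m n j P)) (negP P) = negP (E_add m n (E_mult m n j P) P)"
    by (rule E_add_negP)
  also have "E_add m n (E_mult m n j P) P = E_add m n P (E_mult m n j P)"
    by (rule E_add_comm[OF E_mult_onE[OF P] P])
  finally show ?case by simp
qed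

lemma E_mult_shift:
  assumes "E_mult m n a P = E_mult m n b P" shows "E_mult m n (a+j) P = E_mult m n (b+j) P"
  by (induction j) (use assms in auto)

lemma two_tors_order:
  assumes mn: "m \<noteq> 0" "n \<noteq> 0" "m \<noteq> n" and P: "on_E m n P" and H: "has_order m n P N"
    and d: "0 < d" "d < N" and T: "E_mult m n d P = negP (E_mult m n d P)"
  shows "2*d = N"
proof (rule ccontr)
  assume ne: "2*d \<noteq> N"
  have N0: "E_mult m n N P = None" using H by (simp add: has_order_def)
  have nz: "\<forall>d'. 0 < d' \<and> d' < N \<longrightarrow> E_mult m n d' P \<noteq> None" using H by (simp add: has_order_def)
  have "E_mult m n (N-d) P = negP (E_mult m n d P)"
    using E_mult_backward[OF mn P N0] d by simp
  with T have eq: "E_mult m n (N-d) P = E_mult m n d P" by simp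
  show False
  proof (cases "d < N - d")
    case True
    have "E_mult m n (N-d+d) P = E_mult m n (d+d) P" by (rule E_mult_shift[OF eq])
    then have "E_mult m n (2*d) P = None" using N0 d by (simp add: mult_2)
    moreover have "0 < 2*d" "2*d < N" using True d by auto
    ultimately show False using nz by blast
  next
    case False
    then have lt: "N - d < d" using ne d by auto
    have "E_mult m n (d + (N-d)) P = E_mult m n ((N-d)+(N-d)) P" by (rule E_mult_shift[OF eq[symmetric]])
    then have "E_mult m n (2*(N-d)) P = None" using N0 d by (simp add: mult_2)
    moreover have "0 < 2*(N-d)" "2*(N-d) < N" using lt d by auto
    ultimately show False using nz by blast
  qed
qed



lemma phi_poly:
  fixes M N X0 X1 X2 X3 :: rat
  assumes "X0^2 + M * X1^2 = X2^2" "X0^2 + N * X1^2 = X3^2"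
  shows "(M*N*(M-N)*X1)^2 * (N * X2 - M * X3 + (M - N) * X0) =
    (M*N*(X3-X2)) * (M*N*(X3-X2) + M*(N * X2 - M * X3 + (M - N) * X0)) * (M*N*(X3-X2) + N*(N * X2 - M * X3 + (M - N) * X0))"
  using assms by algebra

lemma phi_onE:
  assumes "on_Q m n X0 X1 X2 X3" shows "on_E m n (phi m n X0 X1 X2 X3)"
proof -
  define M where "M = (of_int m :: rat)"
  define N where "N = (of_int n :: rat)"
  define T where "T = N * X2 - M * X3 + (M - N) * X0"
  define X where "X = M*N*(X3-X2)"
  define Y where "Y = M*N*(M-N)*X1"
  have q: "X0^2 + M * X1^2 = X2^2" "X0^2 + N * X1^2 = X3^2" using assms by (simp_all add: on_Q_def M_def N_def)
  have key: "Y^2 * T = X * (X + M*T) * (X + N*T)" using phi_poly[OF q] by (simp add: X_def Y_def T_def)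
  have ph: "phi m n X0 X1 X2 X3 = (if T = 0 then None else Some (X/T, Y/T))"
    by (simp add: phi_def Let_def M_def N_def T_def X_def Y_def)
  show ?thesis
  proof (cases "T = 0")
    case True then show ?thesis using ph by simp
  next
    case False
    have "(Y/T)^2 = (X/T)*(X/T + M)*(X/T+N)"
    proof -
      have "(Y/T)^2 = (Y^2*T)/T^3" using False by (simp add: power2_eq_square power3_eq_cube)
      also have "\<dots> = (X * (X + M*T) * (X + N*T))/T^3" by (simp add: key)
      also have "\<dots> = (X/T)*(X/T + M)*(X/T+N)" using False by (simp add: field_simps power3_eq_cube)
      finally show ?thesis .
    qed
    then show ?thesis using ph False by (simp add: on_E_Some fE_def M_def N_def)
  qed
qed

lemma dbl_x:
  fixes t yt M N :: rat
  assumes "yt^2 = t*(t+M)*(t+N)" "yt \<noteq> 0"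
  shows "((3*t^2 + 2*(M+N)*t + M*N)/(2*yt))^2 - (M+N) - t - t = (t^2 - M*N)^2/(4*(t*(t+M)*(t+N)))"
proof -
  have "((3*t^2 + 2*(M+N)*t + M*N)/(2*yt))^2 = (3*t^2 + 2*(M+N)*t + M*N)^2/(4*yt^2)"
    by (simp add: power_divide power_mult_distrib)
  also have "\<dots> = (3*t^2 + 2*(M+N)*t + M*N)^2/(4*(t*(t+M)*(t+N)))" using assms(1) by simp
  finally have e: "((3*t^2 + 2*(M+N)*t + M*N)/(2*yt))^2 = (3*t^2 + 2*(M+N)*t + M*N)^2/(4*(t*(t+M)*(t+N)))" .
  have nz: "t*(t+M)*(t+N) \<noteq> 0" using assms by (metis power_not_zero)
  have "(3*t^2 + 2*(M+N)*t + M*N)^2/(4*(t*(t+M)*(t+N))) - (M+N) - t - t = (t^2 - M*N)^2/(4*(t*(t+M)*(t+N)))"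
    using nz by (simp add: divide_simps) algebra
  then show ?thesis using e by simp
qed

lemma transl_gen:
  fixes x xr M N :: rat
  assumes F: "x*(x+M)*(x+N) \<noteq> 0"
    and xr: "xr = -M*(x+N)/(x+M)"
  shows "(xr^2 - M*N)^2 * (x*(x+M)*(x+N)) = (x^2 - M*N)^2 * (xr*(xr+M)*(xr+N))"
proof -
  have xM: "x + M \<noteq> 0" using F by auto
  have a: "xr^2 - M*N = M*(M-N)*(x^2-M*N)/(x+M)^2" unfolding xr using xM
    by (simp add: field_simps) algebra
  have b: "xr + M = M*(M-N)/(x+M)" unfolding xr using xM by (simp add: field_simps)
  have c: "xr + N = (N-M)*x/(x+M)" unfolding xr using xM by (simp add: field_simps)
  obtain u where u: "x + M = u" by blast
  have u0: "u \<noteq> 0" using xM u by simp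
  have d: "xr = -M*(x+N)/u" using xr u by simp
  have "(xr^2 - M*N)^2 * (x*(x+M)*(x+N)) = (M*(M-N)*(x^2-M*N))^2 * (x*u*(x+N)) / u^4"
    unfolding a u using u0 by (simp add: field_simps)
  also have "\<dots> = (x^2 - M*N)^2 * ((-M*(x+N)) * (M*(M-N)) * ((N-M)*x) / u^3)"
    using u0 by (simp add: field_simps) algebra
  also have "(-M*(x+N)) * (M*(M-N)) * ((N-M)*x) / u^3 = xr*(xr+M)*(xr+N)"
  proof -
    have "xr*(xr+M)*(xr+N) = (-M*(x+N)/u)*(M*(M-N)/u)*((N-M)*x/u)"
      using b c d u by simp
    then show ?thesis by (simp add: power3_eq_cube)
  qed
  finally show ?thesis .
qed

lemma transl_0:
  fixes x xr M N :: rat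
  assumes F: "x*(x+M)*(x+N) \<noteq> 0"
    and xr: "xr = M*N/x"
  shows "(xr^2 - M*N)^2 * (x*(x+M)*(x+N)) = (x^2 - M*N)^2 * (xr*(xr+M)*(xr+N))"
proof -
  have x0: "x \<noteq> 0" using F by auto
  have a: "xr^2 - M*N = M*N*(M*N-x^2)/x^2" unfolding xr using x0
    by (simp add: field_simps) algebra
  have b: "xr + M = M*(N+x)/x" unfolding xr using x0 by (simp add: field_simps)
  have c: "xr + N = N*(M+x)/x" unfolding xr using x0 by (simp add: field_simps)
  show ?thesis unfolding a b c using x0 by (simp add: xr field_simps) algebra
qed



lemma param_alg:
  fixes c d w l M N :: rat
  assumes c2: "c^2 = w^2 + M" and c3: "c^3 = w^3 - l*M"
    and d2: "d^2 = w^2 + N" and d3: "d^3 = w^3 - l*N"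
    and M: "M \<noteq> 0" and N: "N \<noteq> 0" and MN: "M \<noteq> N"
  shows "c \<noteq> d \<and> c + d \<noteq> 0 \<and> M*(c+d)^2 = c^3*(c+2*d) \<and> N*(c+d)^2 = d^3*(d+2*c)"
proof -
  have cw: "c - w \<noteq> 0"
  proof
    assume "c - w = 0" then have "c = w" by simp
    then show False using c2 M by simp
  qed
  have dw: "d - w \<noteq> 0"
  proof
    assume "d - w = 0" then have "d = w" by simp
    then show False using d2 N by simp
  qed
  have "(c - w) * (l*(c+w) + (c^2+c*w+w^2)) = 0" using c2 c3 by algebra
  then have "l*(c+w) + (c^2+c*w+w^2) = 0" using cw by simp
  then have lc: "l*(c+w) = -(c^2+c*w+w^2)" by algebra
  have "(d - w) * (l*(d+w) + (d^2+d*w+w^2)) = 0" using d2 d3 by algebra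
  then have "l*(d+w) + (d^2+d*w+w^2) = 0" using dw by simp
  then have ld: "l*(d+w) = -(d^2+d*w+w^2)" by algebra
  have cd: "c \<noteq> d"
  proof
    assume "c = d" then show False using c2 d2 MN by simp
  qed
  have "(c - d) * (w*(c+d) + c*d) = 0" using lc ld by algebra
  then have "w*(c+d) + c*d = 0" using cd by simp
  then have wcd: "w*(c+d) = -(c*d)" by algebra
  have cpd: "c + d \<noteq> 0"
  proof
    assume h: "c + d = 0"
    then have "c*d = 0" using wcd by simp
    then show False using h cd by auto
  qed
  have "M*(c+d)^2 = c^3*(c+2*d)" using c2 wcd by algebra
  moreover have "N*(c+d)^2 = d^3*(d+2*c)" using d2 wcd by algebra
  ultimately show ?thesis using cd cpd by blast
qed

lemma three_tors_param:
  assumes mn: "m \<noteq> 0" "n \<noteq> 0" "m \<noteq> n" and c1: "y^2 = fE m n x" and y0: "y \<noteq> 0"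
    and D: "E_add m n (Some(x,y)) (Some(x,y)) = Some(x, y')"
  shows "\<exists>c d::rat. c \<noteq> d \<and> c + d \<noteq> 0 \<and> of_int m*(c+d)^2 = c^3*(c+2*d) \<and> of_int n*(c+d)^2 = d^3*(d+2*c)"
proof -
  define M where "M = (of_int m :: rat)"
  define N where "N = (of_int n :: rat)"
  have M0: "M \<noteq> 0" and N0: "N \<noteq> 0" and MN: "M \<noteq> N" using mn by (simp_all add: M_def N_def)
  have nc: "\<not> (x = x \<and> y = -y)" using y0 by simp
  obtain l where E: "E_add m n (Some(x,y)) (Some(x,y)) =
       Some(l^2 - (of_int m + of_int n) - x - x, -(l*(l^2 - (of_int m + of_int n) - x - x - x)+y))"
    and Z: "\<And>z. fE m n z - (l*(z-x)+y)^2 = (z-x)*(z-x)*(z-(l^2 - (of_int m + of_int n) - x - x))"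
    using E_add_struct[OF c1 c1 nc] by blast
  have x3: "l^2 - (M + N) - x - x = x" using E D by (simp add: M_def N_def)
  have Z': "z*(z+M)*(z+N) - (l*(z-x)+y)^2 = (z-x)^3" for z
    using Z[of z] x3 by (simp add: fE_def M_def N_def power3_eq_cube)
  have F: "y^2 = x*(x+M)*(x+N)" using c1 by (simp add: fE_def M_def N_def)
  have Fnz: "x*(x+M)*(x+N) \<noteq> 0" using F y0 by (metis power_not_zero)
  have x0: "x \<noteq> 0" and xM: "x + M \<noteq> 0" and xN: "x + N \<noteq> 0" using Fnz by auto
  define nu where "nu = y - l*x"
  have h0: "nu^2 = x^3" using Z'[of 0] unfolding nu_def by (simp add: power2_eq_square power3_eq_cube algebra_simps)
  have hM: "(nu - l*M)^2 = (x+M)^3" using Z'[of "-M"] unfolding nu_def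
    by (simp add: power2_eq_square power3_eq_cube algebra_simps)
  have hN: "(nu - l*N)^2 = (x+N)^3" using Z'[of "-N"] unfolding nu_def
    by (simp add: power2_eq_square power3_eq_cube algebra_simps)
  have nu0: "nu \<noteq> 0" using h0 x0 by auto
  define w where "w = nu / x"
  define c where "c = (nu - l*M)/(x+M)"
  define d where "d = (nu - l*N)/(x+N)"
  have w2: "w^2 = x" unfolding w_def using h0 x0 by (simp add: power_divide power3_eq_cube power2_eq_square)
  have w3: "w^3 = nu" unfolding w_def using h0 x0 nu0
    by (simp add: power_divide field_simps power3_eq_cube power2_eq_square)
  have c2: "c^2 = x + M" unfolding c_def using hM xM by (simp add: power_divide power3_eq_cube power2_eq_square)
  have c3: "c^3 = nu - l*M"
  proof -
    have "c^3 = c * c^2" by (simp add: power3_eq_cube power2_eq_square)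
    then show ?thesis using c2 xM unfolding c_def by simp
  qed
  have d2: "d^2 = x + N" unfolding d_def using hN xN by (simp add: power_divide power3_eq_cube power2_eq_square)
  have d3: "d^3 = nu - l*N"
  proof -
    have "d^3 = d * d^2" by (simp add: power3_eq_cube power2_eq_square)
    then show ?thesis using d2 xN unfolding d_def by simp
  qed
  have "c \<noteq> d \<and> c + d \<noteq> 0 \<and> M*(c+d)^2 = c^3*(c+2*d) \<and> N*(c+d)^2 = d^3*(d+2*c)"
    by (rule param_alg[OF _ _ _ _ M0 N0 MN]) (use c2 c3 d2 d3 w2 w3 in auto)
  then show ?thesis unfolding M_def N_def by blast
qed

lemma delta_step:
  assumes c1: "y1^2 = fE m n x1" and c2: "y2^2 = fE m n x2"
    and E: "E_add m n (Some(x1,y1)) (Some(x2,y2)) = Some (x3,y3)" and r: "fE m n r = 0"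
  shows "\<exists>s. (x1 - r)*(x2-r)*(x3-r) = s^2"
proof -
  have nc: "\<not>(x1=x2 \<and> y1 = -y2)" using E E_add_inv[of m n x1 y1 x2 y2] by auto
  obtain l where E': "E_add m n (Some(x1,y1)) (Some(x2,y2)) =
       Some(l^2 - (of_int m + of_int n) - x1 - x2, -(l*(l^2 - (of_int m + of_int n) - x1 - x2 - x1)+y1))"
    and Z: "\<And>z. fE m n z - (l*(z-x1)+y1)^2 = (z-x1)*(z-x2)*(z-(l^2 - (of_int m + of_int n) - x1 - x2))"
    using E_add_struct[OF c1 c2 nc] by blast
  have "x3 = l^2 - (of_int m + of_int n) - x1 - x2" using E E' by simp
  then have "fE m n r - (l*(r-x1)+y1)^2 = (r-x1)*(r-x2)*(r-x3)" using Z[of r] by simp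
  then have "(x1 - r)*(x2-r)*(x3-r) = (l*(r-x1)+y1)^2" using r by algebra
  then show ?thesis by blast
qed



lemma nt_core:
  fixes k l :: nat and u X Y :: int
  assumes sf: "squarefree k" and p: "prime l" and dk: "l dvd k"
    and eq: "(int k * u) * X^2 = Y^2" and X: "X \<noteq> 0"
  shows "int l dvd u"
proof (rule ccontr)
  assume nd: "\<not> int l dvd u"
  have pi: "prime (int l)" using p by simp
  have k0: "k \<noteq> 0"
  proof
    assume "k = 0"
    then have "(2::nat)^2 dvd k" by simp
    then have "(2::nat) dvd 1" using sf squarefreeD by blast
    then show False by simp
  qed
  have u0: "u \<noteq> 0" using nd by auto
  have Y0: "Y \<noteq> 0" using eq k0 u0 X by auto
  have m1: "multiplicity (int l) (int k) \<ge> 1"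
    using dk k0 pi by (intro multiplicity_geI) auto
  have m2: "multiplicity (int l) (int k) \<le> 1"
  proof (rule ccontr)
    assume "\<not> ?thesis"
    then have "(int l)^2 dvd int k" using k0 pi
      by (intro multiplicity_dvd') auto
    then have "l^2 dvd k" by (metis of_nat_dvd_iff of_nat_power)
    then have "l dvd 1" using sf squarefreeD by blast
    then show False using p by simp
  qed
  have mu: "multiplicity (int l) u = 0" using nd by (rule not_dvd_imp_multiplicity_0)
  have "multiplicity (int l) ((int k * u) * X^2) = multiplicity (int l) (Y^2)" using eq by simp
  then have "multiplicity (int l) (int k) + multiplicity (int l) u + 2 * multiplicity (int l) X
      = 2 * multiplicity (int l) Y"
    using pi k0 u0 X Y0
    by (simp add: prime_elem_multiplicity_mult_distrib prime_elem_multiplicity_power_distrib)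
  then show False using m1 m2 mu by presburger
qed

lemma rat_sq_int:
  assumes "(of_int z :: rat) = s^2"
  shows "\<exists>a b. b \<noteq> 0 \<and> z * b^2 = a^2"
proof -
  obtain a b where q: "quotient_of s = (a, b)" by (cases "quotient_of s")
  have s: "s = of_int a / of_int b" using q by (rule quotient_of_div)
  have b: "b > 0" using q by (rule quotient_of_denom_pos)
  have "(of_int z :: rat) * (of_int b)^2 = (of_int a)^2"
    using assms b unfolding s by (simp add: power_divide field_simps)
  then have "z * b^2 = a^2" by (metis of_int_eq_iff of_int_mult of_int_power)
  then show ?thesis using b by (intro exI[of _ a] exI[of _ b]) simp
qed

lemma part1_nt:
  fixes p q k :: nat
  assumes cop: "coprime p q" and sf: "squarefree k"
    and s1: "(of_int (int p * int k) :: rat) = s^2" and s2: "(of_int ((int p + int q) * int k) :: rat) = t^2"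
  shows "k = 1"
proof (rule ccontr)
  assume "k \<noteq> 1"
  then obtain l where l: "prime l" "l dvd k" using prime_factor_nat by blast
  obtain a b where ab: "b \<noteq> 0" "(int p * int k) * b^2 = a^2" using rat_sq_int[OF s1] by blast
  obtain a' b' where ab': "b' \<noteq> 0" "((int p + int q) * int k) * b'^2 = a'^2" using rat_sq_int[OF s2] by blast
  have "int l dvd int p"
    by (rule nt_core[OF sf l(1) l(2), of _ b a]) (use ab in \<open>simp_all add: mult.commute\<close>)
  moreover have "int l dvd (int p + int q)"
    by (rule nt_core[OF sf l(1) l(2), of _ b' a']) (use ab' in \<open>simp_all add: mult.commute\<close>)
  ultimately have "int l dvd int q" by (metis dvd_add_right_iff)
  then have "l dvd q" by simp
  moreover have "l dvd p" using \<open>int l dvd int p\<close> by simp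
  ultimately show False using cop l(1) by (metis coprime_common_divisor not_prime_unit)
qed



lemma prime3:
  fixes l a b :: int
  assumes l: "prime l" and cop: "coprime a b"
    and dA: "l dvd a^3*(a+2*b)" and dB: "l dvd b^3*(b+2*a)"
  shows "l dvd 3"
proof (rule ccontr)
  assume n3: "\<not> l dvd 3"
  have nab: "\<not> (l dvd a \<and> l dvd b)"
    using cop l by (metis coprime_common_divisor not_prime_unit)
  have hA: "l dvd a \<or> l dvd a + 2*b" using dA l by (simp add: prime_dvd_mult_iff prime_dvd_power_iff)
  have hB: "l dvd b \<or> l dvd b + 2*a" using dB l by (simp add: prime_dvd_mult_iff prime_dvd_power_iff)
  show False
  proof (cases "l dvd a")
    case True
    then have "l dvd b" using hB nab
      by (metis dvd_add_left_iff dvd_mult)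
    then show False using True nab by blast
  next
    case False
    then have a2b: "l dvd a + 2*b" using hA by blast
    show False
    proof (cases "l dvd b")
      case True
      then have "l dvd a" using a2b by (metis dvd_add_left_iff dvd_mult)
      then show False using False by blast
    next
      case nb: False
      then have b2a: "l dvd b + 2*a" using hB by blast
      have "l dvd 2*(a+2*b) - (b+2*a)" using dvd_mult[OF a2b, of 2] b2a by (intro dvd_diff)
      then have "l dvd 3*b" by (simp add: algebra_simps)
      then have "l dvd b" using n3 l by (simp add: prime_dvd_mult_iff)
      then show False using nb by blast
    qed
  qed
qed

lemma only3:
  fixes k :: nat
  assumes sf: "squarefree k" and H: "\<And>l. prime l \<Longrightarrow> l dvd k \<Longrightarrow> l = 3"
  shows "k = 1 \<or> k = 3"
proof (rule ccontr)
  assume ne: "\<not> (k = 1 \<or> k = 3)"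
  then obtain l where l: "prime l" "l dvd k" using prime_factor_nat by blast
  then have "l = 3" using H by blast
  then obtain j where j: "k = 3 * j" using l by blast
  have "j \<noteq> 1" using ne j by auto
  then obtain l' where l': "prime l'" "l' dvd j" using prime_factor_nat by blast
  then have "l' dvd k" using j by simp
  then have "l' = 3" using H l' by blast
  then have "(3::nat)^2 dvd k" using j l' by (auto simp: power2_eq_square)
  then have "(3::nat) dvd 1" using sf squarefreeD by blast
  then show False by simp
qed

lemma rat_int_pair:
  fixes c d :: rat
  obtains C E D :: int where "D \<noteq> 0" "c = of_int C / of_int D" "d = of_int E / of_int D"
proof -
  obtain a1 b1 where q1: "quotient_of c = (a1, b1)" by (cases "quotient_of c")
  obtain a2 b2 where q2: "quotient_of d = (a2, b2)" by (cases "quotient_of d")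
  have c: "c = of_int a1 / of_int b1" using q1 by (rule quotient_of_div)
  have b1: "b1 > 0" using q1 by (rule quotient_of_denom_pos)
  have d: "d = of_int a2 / of_int b2" using q2 by (rule quotient_of_div)
  have b2: "b2 > 0" using q2 by (rule quotient_of_denom_pos)
  show ?thesis
    apply (rule that[of "b1*b2" "a1*b2" "a2*b1"])
    using b1 b2 by (simp_all add: c d field_simps)
qed



lemma part2_nt:
  fixes p q k :: nat and c d :: rat
  assumes p0: "p > 0" and cop: "coprime p q" and sf: "squarefree k"
    and cd: "c \<noteq> d" and cpd: "c + d \<noteq> 0"
    and hM: "of_int (-(int p * int k)) * (c+d)^2 = c^3*(c+2*d)"
    and hN: "of_int (int q * int k) * (c+d)^2 = d^3*(d+2*c)"
  shows "k = 1 \<or> k = 3"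
proof -
  define Mi where "Mi = -(int p * int k)"
  define Ni where "Ni = int q * int k"
  obtain C E D :: int where D: "D \<noteq> 0" and c: "c = of_int C / of_int D" and d: "d = of_int E / of_int D"
    by (rule rat_int_pair)
  have "of_int (Mi * (C+E)^2 * D^2) = (of_int (C^3*(C+2*E)) :: rat)"
  proof -
    have "of_int Mi * ((of_int C + of_int E)/of_int D)^2 = (of_int C/of_int D)^3*(of_int C/of_int D+2*(of_int E/of_int D) :: rat)"
      using hM unfolding c d Mi_def by (simp add: add_divide_distrib)
    then have "(of_int D)^4 * (of_int Mi * ((of_int C + of_int E)/of_int D)^2) = (of_int D)^4 * ((of_int C/of_int D)^3*(of_int C/of_int D+2*(of_int E/of_int D)) :: rat)"
      by simp
    moreover have "(of_int D)^4 * (of_int Mi * ((of_int C + of_int E)/of_int D)^2) = (of_int Mi * (of_int C + of_int E)^2 * (of_int D)^2 :: rat)"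
      using D by (simp add: field_simps power2_eq_square power4_eq_xxxx)
    moreover have "(of_int D)^4 * ((of_int C/of_int D)^3*(of_int C/of_int D+2*(of_int E/of_int D))) = ((of_int C)^3*(of_int C+2*of_int E) :: rat)"
      using D by (simp add: field_simps power3_eq_cube power4_eq_xxxx)
    ultimately show ?thesis by simp
  qed
  then have eM: "Mi * (C+E)^2 * D^2 = C^3*(C+2*E)" by (rule of_int_eq_iff[THEN iffD1])
  have "of_int (Ni * (C+E)^2 * D^2) = (of_int (E^3*(E+2*C)) :: rat)"
  proof -
    have "of_int Ni * ((of_int C + of_int E)/of_int D)^2 = (of_int E/of_int D)^3*(of_int E/of_int D+2*(of_int C/of_int D) :: rat)"
      using hN unfolding c d Ni_def by (simp add: add_divide_distrib)
    then have "(of_int D)^4 * (of_int Ni * ((of_int C + of_int E)/of_int D)^2) = (of_int D)^4 * ((of_int E/of_int D)^3*(of_int E/of_int D+2*(of_int C/of_int D)) :: rat)"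
      by simp
    moreover have "(of_int D)^4 * (of_int Ni * ((of_int C + of_int E)/of_int D)^2) = (of_int Ni * (of_int C + of_int E)^2 * (of_int D)^2 :: rat)"
      using D by (simp add: field_simps power2_eq_square power4_eq_xxxx)
    moreover have "(of_int D)^4 * ((of_int E/of_int D)^3*(of_int E/of_int D+2*(of_int C/of_int D))) = ((of_int E)^3*(of_int E+2*of_int C) :: rat)"
      using D by (simp add: field_simps power3_eq_cube power4_eq_xxxx)
    ultimately show ?thesis by simp
  qed
  then have eN: "Ni * (C+E)^2 * D^2 = E^3*(E+2*C)" by (rule of_int_eq_iff[THEN iffD1])
  have CE: "C \<noteq> E" using cd c d by auto
  have CEs: "C + E \<noteq> 0"
  proof
    assume "C + E = 0"
    then have "c + d = 0" unfolding c d by (simp add: add_divide_distrib[symmetric])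
    then show False using cpd by simp
  qed
  have g0: "gcd C E \<noteq> 0" using CE by auto
  obtain a b where ab: "C = a * gcd C E" "E = b * gcd C E" "coprime a b"
    using gcd_coprime_exists[OF g0] by blast
  define g where "g = gcd C E"
  have ab': "C = a * g" "E = b * g" using ab g_def by auto
  have g2: "g^2 \<noteq> 0" using g0 g_def by simp
  define X where "X = (a+b)*D"
  define A where "A = a^3*(a+2*b)"
  define B where "B = b^3*(b+2*a)"
  have "(a+b)*g \<noteq> 0" using CEs ab' by (simp add: distrib_right)
  then have X0: "X \<noteq> 0" using D unfolding X_def by auto
  have "g^2 * (Mi * X^2) = g^2 * (g^2 * A)" using eM unfolding ab' X_def A_def by algebra
  then have eM': "Mi * X^2 = g^2 * A" using g2 by (metis mult_left_cancel)
  have "g^2 * (Ni * X^2) = g^2 * (g^2 * B)" using eN unfolding ab' X_def B_def by algebra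
  then have eN': "Ni * X^2 = g^2 * B" using g2 by (metis mult_left_cancel)
  have "g^2 * (int q * A + int p * B) = 0" using eM' eN' unfolding Mi_def Ni_def by algebra
  then have "int q * A + int p * B = 0" using g2 by simp
  then have qA: "int q * A = - (int p * B)" by (simp add: eq_neg_iff_add_eq_0)
  have copi: "coprime (int p) (int q)" using cop by simp
  have "int p dvd int q * A" using qA by (metis dvd_minus_iff dvd_triv_left)
  then have "int p dvd A" using copi by (simp add: coprime_dvd_mult_right_iff)
  then obtain t0 where t0: "A = int p * t0" by blast
  have pne: "int p \<noteq> 0" using p0 by simp
  have "int p * (int q * t0) = int p * (- B)" using qA t0 by (simp add: algebra_simps)
  then have "int q * t0 = - B" using pne by (metis mult_left_cancel)
  then have Bt: "B = int q * (- t0)" by simp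
  define t where "t = - t0"
  have At: "A = - (int p * t)" using t0 t_def by simp
  have Bt': "B = int q * t" using Bt t_def by simp
  have "int p * (int k * X^2) = int p * (g^2 * t)" using eM' At unfolding Mi_def by (simp add: algebra_simps)
  then have kt: "int k * X^2 = g^2 * t" using pne by simp
  have kt2: "(int k * t) * X^2 = (g*t)^2" using kt by algebra
  show ?thesis
  proof (rule only3[OF sf])
    fix l assume l: "prime l" "l dvd k"
    have "int l dvd t" by (rule nt_core[OF sf l kt2 X0])
    then have "int l dvd A" "int l dvd B" unfolding At Bt' by auto
    then have "int l dvd 3" using prime3[of "int l" a b] l ab(3) unfolding A_def B_def by simp
    then have "l dvd 3" by (metis of_nat_dvd_iff of_nat_numeral)
    then show "l = 3" using l(1) using primes_dvd_imp_eq[of l 3] by simp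
  qed
qed



lemma negP_negP[simp]: "negP (negP P) = P" by (cases P) auto

lemma negP_fix:
  assumes "P = negP P" "P \<noteq> None"
  obtains e where "P = Some (e, 0)"
proof -
  obtain e y where P: "P = Some (e,y)" using assms(2) by (cases P) auto
  then have "y = -y" using assms(1) by simp
  then have "y = 0" by simp
  then show ?thesis using that P by blast
qed

lemma has_order_nz:
  assumes "has_order m n P N" "0 < i" "i < N" shows "E_mult m n i P \<noteq> None"
  using assms by (simp add: has_order_def)

lemma has_order_P:
  assumes "has_order m n P N" "1 < N" shows "P \<noteq> None"
  using has_order_nz[OF assms(1), of 1] assms(2) by simp

lemma not_two_tors:
  assumes mn: "m \<noteq> 0" "n \<noteq> 0" "m \<noteq> n" and P: "on_E m n P" and H: "has_order m n P N"
    and i: "0 < i" "i < N" "2*i \<noteq> N"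
  obtains xi yi where "E_mult m n i P = Some (xi, yi)" "yi \<noteq> 0" "fE m n xi \<noteq> 0"
proof -
  obtain xi yi where S: "E_mult m n i P = Some (xi,yi)" using has_order_nz[OF H i(1,2)] by auto
  have "yi \<noteq> 0"
  proof
    assume "yi = 0"
    then have "E_mult m n i P = negP (E_mult m n i P)" using S by simp
    then have "2*i = N" by (rule two_tors_order[OF mn P H i(1,2)])
    then show False using i(3) by simp
  qed
  moreover have "yi^2 = fE m n xi" using E_mult_onE[OF P, of i] S by (simp add: on_E_Some)
  ultimately show ?thesis using that S by (metis power_not_zero)
qed

definition xof :: "ecpt \<Rightarrow> rat" where "xof P = fst (the P)"

lemma tors_even:
  assumes mn: "m \<noteq> 0" "n \<noteq> 0" "m \<noteq> n" and P: "on_E m n P" and H: "has_order m n P N"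
    and N: "N = 2*h" and h: "even h" "h > 0"
  shows "\<exists>e. fE m n e = 0 \<and> (\<forall>r. fE m n r = 0 \<longrightarrow> r \<noteq> e \<longrightarrow> (\<exists>s. e - r = s^2))"
proof -
  have N0: "E_mult m n N P = None" using H by (simp add: has_order_def)
  have "E_mult m n (N-h) P = negP (E_mult m n h P)"
    using E_mult_backward[OF mn P N0, of h] N by simp
  then have Tfix: "E_mult m n h P = negP (E_mult m n h P)" using N by simp
  have Tnz: "E_mult m n h P \<noteq> None" using has_order_nz[OF H, of h] h N by simp
  obtain e where Te: "E_mult m n h P = Some (e, 0)" using negP_fix[OF Tfix Tnz] by blast
  have fe: "fE m n e = 0" using E_mult_onE[OF P, of h] Te by (simp add: on_E_Some)
  have small: "\<And>i. 0 < i \<Longrightarrow> i < h \<Longrightarrow> \<exists>xi yi. E_mult m n i P = Some (xi, yi) \<and> fE m n xi \<noteq> 0"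
  proof -
    fix i assume "0 < i" "i < h"
    then have "0 < i" "i < N" "2*i \<noteq> N" using N by auto
    then show "\<exists>xi yi. E_mult m n i P = Some (xi, yi) \<and> fE m n xi \<noteq> 0"
      using not_two_tors[OF mn P H] by metis
  qed
  have "\<forall>r. fE m n r = 0 \<longrightarrow> r \<noteq> e \<longrightarrow> (\<exists>s. e - r = s^2)"
  proof (intro allI impI)
    fix r assume r: "fE m n r = 0" "r \<noteq> e"
    define u where "u i = xof (E_mult m n i P) - r" for i
    have unz: "u i \<noteq> 0" if i0: "0 < i" and ih: "i \<le> h" for i
    proof (cases "i = h")
      case True then show ?thesis using Te r(2) by (simp add: u_def xof_def)
    next
      case False
      then obtain xi yi where "E_mult m n i P = Some (xi, yi)" "fE m n xi \<noteq> 0"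
        using small[of i] i0 ih by auto
      then show ?thesis using r(1) by (auto simp: u_def xof_def)
    qed
    have chain: "1 \<le> j \<Longrightarrow> j \<le> h \<Longrightarrow> \<exists>s. u j * (u 1)^j = s^2" for j
    proof (induction j rule: nat_induct_at_least)
      case base then show ?case by (auto simp: power2_eq_square)
    next
      case (Suc j)
      then obtain t where t: "u j * (u 1)^j = t^2" by auto
      have j1: "0 < j" "j < h" using Suc by auto
      obtain xj yj where Sj: "E_mult m n j P = Some (xj, yj)" using has_order_nz[OF H, of j] j1 N by auto
      obtain x1 y1 where S1: "P = Some (x1, y1)" using has_order_P[OF H] N h by (cases P) auto
      obtain x3 y3 where S3: "E_mult m n (Suc j) P = Some (x3, y3)"
        using has_order_nz[OF H, of "Suc j"] Suc N by auto
      have c1: "y1^2 = fE m n x1" using P S1 by (simp add: on_E_Some)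
      have cj: "yj^2 = fE m n xj" using E_mult_onE[OF P, of j] Sj by (simp add: on_E_Some)
      have "E_add m n (Some (x1,y1)) (Some (xj,yj)) = Some (x3,y3)" using S3 S1 Sj by simp
      then obtain s where s: "(x1 - r)*(xj-r)*(x3-r) = s^2" using delta_step[OF c1 cj _ r(1)] by blast
      have u1: "u 1 = x1 - r" and uj: "u j = xj - r" and u3: "u (Suc j) = x3 - r"
        using S1 Sj S3 by (simp_all add: u_def xof_def)
      have ujz: "u j \<noteq> 0" using unz j1 by simp
      have "u (Suc j) * (u 1)^(Suc j) = (s*t/u j)^2"
      proof -
        have "(u 1 * u j * u (Suc j)) * (u j * (u 1)^j) = s^2 * t^2" using s t u1 uj u3 by simp
        then have "(u (Suc j) * (u 1)^(Suc j)) * (u j)^2 = (s*t)^2" by (simp add: algebra_simps power2_eq_square)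
        then show ?thesis using ujz by (simp add: power_divide field_simps)
      qed
      then show ?case by blast
    qed
    obtain s where s: "u h * (u 1)^h = s^2" using chain[of h] h by auto
    obtain h2 where h2: "h = 2*h2" using h by (auto elim: evenE)
    have u10: "u 1 \<noteq> 0" using unz[of 1] h by simp
    have "u h = (s / (u 1)^h2)^2"
    proof -
      have "(u 1)^h = ((u 1)^h2)^2" using h2 by (simp add: power_mult[symmetric] mult.commute)
      then show ?thesis using s u10 by (simp add: power_divide field_simps)
    qed
    moreover have "u h = e - r" using Te by (simp add: u_def xof_def)
    ultimately show "\<exists>s. e - r = s^2" by metis
  qed
  then show ?thesis using fe by blast
qed



lemma dbl_fst:
  assumes c: "yt^2 = fE m n t" and y0: "yt \<noteq> 0"
  shows "\<exists>yy. E_add m n (Some(t,yt)) (Some(t,yt)) =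
     Some ((t^2 - of_int m * of_int n)^2/(4*(t*(t+of_int m)*(t+of_int n))), yy)"
proof -
  have nc: "\<not> (t = t \<and> yt = -yt)" using y0 by simp
  have "((3*t^2 + 2*(of_int m + of_int n)*t + of_int m * of_int n)/(2*yt))^2 - (of_int m + of_int n) - t - t
      = (t^2 - of_int m * of_int n)^2/(4*(t*(t+of_int m)*(t+of_int n)))"
    by (rule dbl_x) (use c y0 in \<open>simp_all add: fE_def\<close>)
  then show ?thesis by (simp add: E_add_SS[OF nc] Let_def)
qed

lemma three_case:
  assumes mn: "m \<noteq> 0" "n \<noteq> 0" "m \<noteq> n" and P: "on_E m n P" and H: "has_order m n P 3"
  shows "\<exists>x y y'. y^2 = fE m n x \<and> y \<noteq> 0 \<and> E_add m n (Some(x,y)) (Some(x,y)) = Some(x, y')"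
proof -
  obtain x y where S: "P = Some (x,y)" using has_order_P[OF H] by (cases P) auto
  have c: "y^2 = fE m n x" using P S by (simp add: on_E_Some)
  have n2: "E_add m n P P \<noteq> None" using has_order_nz[OF H, of 2] by (simp add: numeral_2_eq_2)
  have n3: "E_add m n P (E_add m n P P) = None" using H by (simp add: has_order_def numeral_3_eq_3)
  obtain x2 y2 where S2: "E_add m n P P = Some (x2,y2)" using n2 by auto
  have xy: "x = x2 \<and> y = -y2" using n3 S S2 E_add_inv by simp
  have y0: "y \<noteq> 0" using n2 S E_add_inv by auto
  have "E_add m n (Some(x,y)) (Some(x,y)) = Some(x, y2)" using S S2 xy by simp
  then show ?thesis using c y0 by blast
qed

lemma six_case:
  assumes mn: "m \<noteq> 0" "n \<noteq> 0" "m \<noteq> n" and P: "on_E m n P" and H: "has_order m n P 6"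
  shows "\<exists>x y y'. y^2 = fE m n x \<and> y \<noteq> 0 \<and> E_add m n (Some(x,y)) (Some(x,y)) = Some(x, y')"
proof -
  define M where "M = (of_int m :: rat)"
  define N where "N = (of_int n :: rat)"
  have M0: "M \<noteq> 0" and N0: "N \<noteq> 0" and MN: "M \<noteq> N" using mn by (simp_all add: M_def N_def)
  have N6: "E_mult m n 6 P = None" using H by (simp add: has_order_def)
  obtain x y where S: "P = Some (x,y)" "y \<noteq> 0" "fE m n x \<noteq> 0"
    using not_two_tors[OF mn P H, of 1] by auto
  have c: "y^2 = fE m n x" using P S by (simp add: on_E_Some)
  have "E_mult m n (6-3) P = negP (E_mult m n 3 P)" using E_mult_backward[OF mn P N6, of 3] by simp
  then have Tfix: "E_mult m n 3 P = negP (E_mult m n 3 P)" by simp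
  obtain e where Te: "E_mult m n 3 P = Some (e, 0)"
    using negP_fix[OF Tfix has_order_nz[OF H, of 3]] by auto
  have fe: "fE m n e = 0" using E_mult_onE[OF P, of 3] Te by (simp add: on_E_Some)
  have xe: "x \<noteq> e" using S(3) fe by auto
  have "E_mult m n (6-2) P = negP (E_mult m n 2 P)" using E_mult_backward[OF mn P N6, of 2] by simp
  then have R2: "E_mult m n 2 P = negP (E_mult m n 4 P)" by simp
  obtain xr yr where R: "E_mult m n 4 P = Some (xr, yr)" "yr \<noteq> 0" "fE m n xr \<noteq> 0"
    using not_two_tors[OF mn P H, of 4] by auto
  have cr: "yr^2 = fE m n xr" using E_mult_onE[OF P, of 4] R by (simp add: on_E_Some)
  have "E_mult m n 4 P = E_add m n P (E_mult m n 3 P)" by (simp add: numeral_eq_Suc)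
  then have "E_add m n (Some (x,y)) (Some (e,0)) = Some (xr, yr)" using R Te S by simp
  moreover have nce: "\<not> (x = e \<and> y = - 0)" using xe by simp
  ultimately have xr: "xr = ((0 - y)/(e-x))^2 - (M+N) - x - e"
    using xe by (simp add: E_add_SS[OF nce] Let_def M_def N_def)
  have "E_mult m n 2 P = E_add m n P P" by (simp add: numeral_eq_Suc)
  then have "E_add m n (Some(x,y)) (Some(x,y)) = Some (xr, -yr)" using R2 R S by simp
  moreover obtain yy where "E_add m n (Some(x,y)) (Some(x,y)) =
     Some ((x^2 - M*N)^2/(4*(x*(x+M)*(x+N))), yy)" using dbl_fst[OF c S(2)] by (auto simp: M_def N_def)
  ultimately have xr2: "xr = (x^2 - M*N)^2/(4*(x*(x+M)*(x+N)))" by simp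
  obtain yy' where D: "E_add m n (Some(xr,yr)) (Some(xr,yr)) =
     Some ((xr^2 - M*N)^2/(4*(xr*(xr+M)*(xr+N))), yy')" using dbl_fst[OF cr R(2)] by (auto simp: M_def N_def)
  have F: "x*(x+M)*(x+N) \<noteq> 0" using S(3) by (simp add: fE_def M_def N_def)
  have Fr: "xr*(xr+M)*(xr+N) \<noteq> 0" using R(3) by (simp add: fE_def M_def N_def)
  have y2: "y^2 = x*(x+M)*(x+N)" using c by (simp add: fE_def M_def N_def)
  have xr': "xr = x*(x+M)*(x+N)/(x-e)^2 - (M+N) - x - e"
    using xr y2 by (simp add: power_divide power2_commute)
  have ee: "e = 0 \<or> e = -M \<or> e = -N" using fe by (auto simp: fE_def M_def N_def add_eq_0_iff2)
  have tr: "(xr^2 - M*N)^2 * (x*(x+M)*(x+N)) = (x^2 - M*N)^2 * (xr*(xr+M)*(xr+N))"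
  proof -
    { assume e0: "e = 0"
      have x0: "x \<noteq> 0" using F by auto
      have "xr = M*N/x" using xr' e0 x0 by (simp add: field_simps power2_eq_square)
      then have ?thesis by (rule transl_0[OF F]) }
    moreover
    { assume e0: "e = -M"
      have x0: "x + M \<noteq> 0" using F by auto
      have q0: "x*(x+M)*(x+N) = (x*(x+N))*(x+M)" by (simp add: ac_simps)
      have q: "x*(x+M)*(x+N)/(x+M)^2 = x*(x+N)/(x+M)"
        unfolding q0 power2_eq_square using x0 by (rule nonzero_mult_divide_mult_cancel_right)
      have xr'': "xr = x*(x+M)*(x+N)/(x+M)^2 - (M+N) - x + M" using xr' e0 by simp
      have "xr = x*(x+N)/(x+M) - N - x" unfolding xr'' q by simp
      also have "\<dots> = -M*(x+N)/(x+M)" using x0 by (simp add: field_simps)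
      finally have "xr = -M*(x+N)/(x+M)" .
      then have ?thesis by (rule transl_gen[OF F]) }
    moreover
    { assume e0: "e = -N"
      have x0: "x + N \<noteq> 0" using F by auto
      have F': "x*(x+N)*(x+M) \<noteq> 0" using F by (simp add: mult.commute mult.left_commute)
      have q: "x*(x+M)*(x+N)/(x+N)^2 = x*(x+M)/(x+N)"
        unfolding power2_eq_square using x0 by (rule nonzero_mult_divide_mult_cancel_right)
      have xr'': "xr = x*(x+M)*(x+N)/(x+N)^2 - (M+N) - x + N" using xr' e0 by simp
      have "xr = x*(x+M)/(x+N) - M - x" unfolding xr'' q by simp
      also have "\<dots> = -N*(x+M)/(x+N)" using x0 by (simp add: field_simps)
      finally have "xr = -N*(x+M)/(x+N)" .
      then have "(xr^2 - N*M)^2 * (x*(x+N)*(x+M)) = (x^2 - N*M)^2 * (xr*(xr+N)*(xr+M))"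
        by (rule transl_gen[OF F'])
      moreover have e1: "N*M = M*N" by (rule mult.commute)
      moreover have e2: "x*(x+N)*(x+M) = x*(x+M)*(x+N)" by (simp add: ac_simps)
      moreover have e3: "xr*(xr+N)*(xr+M) = xr*(xr+M)*(xr+N)" by (simp add: ac_simps)
      ultimately have ?thesis by simp }
    ultimately show ?thesis using ee by blast
  qed
  have "(xr^2 - M*N)^2/(4*(xr*(xr+M)*(xr+N))) = (x^2 - M*N)^2/(4*(x*(x+M)*(x+N)))"
  proof -
    have "(xr^2 - M*N)^2 * (4*(x*(x+M)*(x+N))) = (x^2 - M*N)^2 * (4*(xr*(xr+M)*(xr+N)))"
      using tr by (metis mult.left_commute)
    moreover have "4*(xr*(xr+M)*(xr+N)) \<noteq> 0" "4*(x*(x+M)*(x+N)) \<noteq> 0" using F Fr by auto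
    ultimately show ?thesis by (simp add: frac_eq_eq)
  qed
  then have "E_add m n (Some(xr,yr)) (Some(xr,yr)) = Some (xr, yy')" using D xr2 by simp
  then show ?thesis using cr R(2) by blast
qed



lemma conc_P:
  assumes "concordant_torsion m n N"
  shows "\<exists>P. on_E m n P \<and> has_order m n P N"
  using assms phi_onE unfolding concordant_torsion_def by blast

theorem theorem4p1:
  fixes p q k :: nat
  assumes "0 < p" and "0 < q" and "coprime p q" and "squarefree k"
  shows "(concordant_torsion (- (int p * int k)) (int q * int k) 4 \<or>
          concordant_torsion (- (int p * int k)) (int q * int k) 8 \<longrightarrow> k = 1) \<and>
         (concordant_torsion (- (int p * int k)) (int q * int k) 3 \<or>
          concordant_torsion (- (int p * int k)) (int q * int k) 6 \<longrightarrow> k = 1 \<or> k = 3)"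
proof -
  define m where "m = - (int p * int k)"
  define n where "n = int q * int k"
  have k0: "k \<noteq> 0"
  proof
    assume "k = 0"
    then have "(2::nat)^2 dvd k" by simp
    then have "(2::nat) dvd 1" using assms(4) squarefreeD by blast
    then show False by simp
  qed
  have mneg: "m < 0" using assms(1) k0 unfolding m_def by simp
  have npos: "n > 0" using assms(2) k0 unfolding n_def by simp
  have mn: "m \<noteq> 0" "n \<noteq> 0" "m \<noteq> n" using mneg npos by auto
  have r0: "fE m n 0 = 0" and rM: "fE m n (- of_int m) = 0" and rN: "fE m n (- of_int n) = 0"
    by (simp_all add: fE_def)
  have Mneg: "(of_int m :: rat) < 0" using mneg by simp
  have Npos: "(of_int n :: rat) > 0" using npos by simp
  have part1: "k = 1" if c: "concordant_torsion m n 4 \<or> concordant_torsion m n 8"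
  proof -
    obtain P N h where P: "on_E m n P" "has_order m n P N" and Nh: "N = 2*h" "even h" "h > 0"
      using c conc_P by (metis dvd_triv_left even_numeral mult_2 numeral_Bit0 zero_less_numeral)
    obtain e where fe: "fE m n e = 0" and E: "\<And>r. fE m n r = 0 \<Longrightarrow> r \<noteq> e \<Longrightarrow> \<exists>s. e - r = s^2"
      using tors_even[OF mn P Nh] by blast
    have "e = 0 \<or> e = - of_int m \<or> e = - of_int n" using fe by (auto simp: fE_def add_eq_0_iff2)
    moreover have "e \<noteq> 0"
    proof
      assume "e = 0"
      then obtain s where "0 - (- of_int m) = (s::rat)^2" using E[OF rM] Mneg by auto
      then show False using Mneg by (metis diff_0 minus_minus not_less zero_le_power2)
    qed
    moreover have "e \<noteq> - of_int n"
    proof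
      assume "e = - of_int n"
      then obtain s where "- of_int n - 0 = (s::rat)^2" using E[OF r0] Npos by auto
      then show False using Npos by (metis diff_zero neg_less_0_iff_less not_less zero_le_power2)
    qed
    ultimately have em: "e = - of_int m" by blast
    obtain s where s: "- of_int m - 0 = (s::rat)^2" using E[OF r0] em Mneg by auto
    obtain t where t: "- of_int m - (- of_int n) = (t::rat)^2" using E[OF rN] em mn by auto
    show "k = 1"
      by (rule part1_nt[OF assms(3,4), of s t]) (use s t in \<open>simp_all add: m_def n_def algebra_simps\<close>)
  qed
  have part2: "k = 1 \<or> k = 3" if c: "concordant_torsion m n 3 \<or> concordant_torsion m n 6"
  proof -
    have "\<exists>x y y'. y^2 = fE m n x \<and> y \<noteq> 0 \<and> E_add m n (Some(x,y)) (Some(x,y)) = Some(x, y')"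
      using c conc_P three_case[OF mn] six_case[OF mn] by metis
    then obtain x y y' where "y^2 = fE m n x" "y \<noteq> 0" "E_add m n (Some(x,y)) (Some(x,y)) = Some(x, y')"
      by blast
    then obtain c d :: rat where cd: "c \<noteq> d" "c + d \<noteq> 0" "of_int m*(c+d)^2 = c^3*(c+2*d)"
      "of_int n*(c+d)^2 = d^3*(d+2*c)"
      using three_tors_param[OF mn] by blast
    show ?thesis
      by (rule part2_nt[OF assms(1,3,4) cd(1,2)]) (use cd in \<open>simp_all add: m_def n_def\<close>)
  qed
  show ?thesis using part1 part2 unfolding m_def n_def by blast
qed

end
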